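(* Identify each ququart basis state $|1\rangle,|2\rangle,|3\rangle,|4\rangle$ of $\mathbb{C}^4$ with the two-qubit states $|00\rangle,|01\rangle,|10\rangle,|11\rangle$ respectively. Let $$L=\begin{pmatrix}1&2&3&4\\2&1&4&3\\3&4&1&2\\4&3&2&1\end{pmatrix},\quad M=\begin{pmatrix}1&2&3&4\\3&4&1&2\\4&3&2&1\\2&1&4&3\end{pmatrix},$$ $P_{16}=\sum_{l,j=1}^4|L_{lj},M_{lj}\rangle\langle l,j|$ acting on $\mathbb{C}^4\otimes\mathbb{C}^4$, and $\Phi_A(\rho)=\mathrm{Tr}_2[P_{16}\rho P_{16}^\dagger]$ (partial trace over the second ququart). Write the first ququart as qubits $(q_1,q_2)$ and the second as $(q_3,q_4)$, let $|\Psi_\pm\rangle=(|00\rangle\pm|11\rangle)/\sqrt2$, $|\Xi_\pm\rangle=(|01\rangle\pm|10\rangle)/\sqrt2$, and write $|X\rangle\otimes|Y\rangle$ for the state with $|X\rangle$ on the first qubits $(q_1,q_3)$ of the two ququarts and $|Y\rangle$ on the second qubits $(q_2,q_4)$. Consider the orthonormal basis arranged in the $4\times4$ array Row 1: $|\Psi_+\rangle|\Psi_+\rangle,\ |\Psi_+\rangle|\Psi_-\rangle,\ |\Psi_-\rangle|\Psi_+\rangle,\ |\Psi_-\rangle|\Psi_-\rangle$; Row 2: $|\Psi_+\rangle|\Xi_+\rangle,\ |\Psi_+\rangle|\Xi_-\rangle,\ -|\Psi_-\rangle|\Xi_+\rangle,\ -|\Psi_-\rangle|\Xi_-\rangle$;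 Row 3: $|\Xi_+\rangle|\Psi_+\rangle,\ -|\Xi_+\rangle|\Psi_-\rangle,\ -|\Xi_-\rangle|\Psi_+\rangle,\ |\Xi_-\rangle|\Psi_-\rangle$; Row 4: $|\Xi_+\rangle|\Xi_+\rangle,\ -|\Xi_+\rangle|\Xi_-\rangle,\ |\Xi_-\rangle|\Xi_+\rangle,\ -|\Xi_-\rangle|\Xi_-\rangle$. Fix $m$ rows and $n$ columns of this array, and consider the two-ququart pure states $|\psi\rangle$ whose expansion in this basis uses only basis vectors lying in the chosen $m$ rows and $n$ columns. Then the maximal number of nonzero eigenvalues of $\Phi_A(|\psi\rangle\langle\psi|)$ over such states equals $\min(m,n)$. *)

theory Defs
  imports Complex_Main "Jordan_Normal_Form.Char_Poly"
begin

text \<open>Indices are 0-based: ququart basis state |k+1> is index k, k in {0..3};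
  ququart index a corresponds to the qubit pair (a div 2, a mod 2).
  A two-ququart vector is a function psi a b (amplitude of |a>|b>).\<close>

definition Lsq :: "nat \<Rightarrow> nat \<Rightarrow> nat" where
  "Lsq l j = [[0,1,2,3],[1,0,3,2],[2,3,0,1],[3,2,1,0]] ! l ! j"

definition Msq :: "nat \<Rightarrow> nat \<Rightarrow> nat" where
  "Msq l j = [[0,1,2,3],[2,3,0,1],[3,2,1,0],[1,0,3,2]] ! l ! j"

definition P16 :: "(nat \<Rightarrow> nat \<Rightarrow> complex) \<Rightarrow> nat \<Rightarrow> nat \<Rightarrow> complex" where
  "P16 psi a b = (\<Sum>l<4. \<Sum>j<4. if Lsq l j = a \<and> Msq l j = b then psi l j else 0)"

definition PhiA :: "(nat \<Rightarrow> nat \<Rightarrow> complex) \<Rightarrow> complex mat" where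
  "PhiA psi = mat 4 4 (\<lambda>(a, a'). \<Sum>b<4. P16 psi a b * cnj (P16 psi a' b))"

definition num_nonzero_eigs :: "complex mat \<Rightarrow> nat" where
  "num_nonzero_eigs A = (\<Sum>e\<in>{e. eigenvalue A e \<and> e \<noteq> 0}. order e (char_poly A))"

definition PsiP :: "nat \<Rightarrow> nat \<Rightarrow> complex" where
  "PsiP x y = (if (x, y) = (0, 0) \<or> (x, y) = (1, 1) then 1 / sqrt 2 else 0)"
definition PsiM :: "nat \<Rightarrow> nat \<Rightarrow> complex" where
  "PsiM x y = (if (x, y) = (0, 0) then 1 / sqrt 2 else if (x, y) = (1, 1) then - 1 / sqrt 2 else 0)"
definition XiP :: "nat \<Rightarrow> nat \<Rightarrow> complex" where
  "XiP x y = (if (x, y) = (0, 1) \<or> (x, y) = (1, 0) then 1 / sqrt 2 else 0)"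
definition XiM :: "nat \<Rightarrow> nat \<Rightarrow> complex" where
  "XiM x y = (if (x, y) = (0, 1) then 1 / sqrt 2 else if (x, y) = (1, 0) then - 1 / sqrt 2 else 0)"

text \<open>|X>|Y>: X on qubits (q1,q3), Y on qubits (q2,q4), where the first ququart
  is (q1,q2) and the second is (q3,q4).\<close>
definition tens :: "(nat \<Rightarrow> nat \<Rightarrow> complex) \<Rightarrow> (nat \<Rightarrow> nat \<Rightarrow> complex) \<Rightarrow> nat \<Rightarrow> nat \<Rightarrow> complex" where
  "tens X Y a b = X (a div 2) (b div 2) * Y (a mod 2) (b mod 2)"

definition arrX :: "nat \<Rightarrow> nat \<Rightarrow> nat \<Rightarrow> nat \<Rightarrow> complex" where
  "arrX r c = [[PsiP,PsiP,PsiM,PsiM],[PsiP,PsiP,PsiM,PsiM],[XiP,XiP,XiM,XiM],[XiP,XiP,XiM,XiM]] ! r ! c"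
definition arrY :: "nat \<Rightarrow> nat \<Rightarrow> nat \<Rightarrow> nat \<Rightarrow> complex" where
  "arrY r c = [[PsiP,PsiM,PsiP,PsiM],[XiP,XiM,XiP,XiM],[PsiP,PsiM,PsiP,PsiM],[XiP,XiM,XiP,XiM]] ! r ! c"
definition arrSign :: "nat \<Rightarrow> nat \<Rightarrow> complex" where
  "arrSign r c = [[1,1,1,1],[1,1,-1,-1],[1,-1,-1,1],[1,-1,1,-1]] ! r ! c"

definition basisB :: "nat \<Rightarrow> nat \<Rightarrow> nat \<Rightarrow> nat \<Rightarrow> complex" where
  "basisB r c a b = arrSign r c * tens (arrX r c) (arrY r c) a b"

end

theory Submission
  imports Defs
begin

lemma det_sylvester:
  fixes X Y :: "'b::idom mat"
  assumes X: "X \<in> carrier_mat n n" and Y: "Y \<in> carrier_mat n n" and z: "z \<noteq> 0"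
  shows "det (z \<cdot>\<^sub>m 1\<^sub>m n - X * Y) = det (z \<cdot>\<^sub>m 1\<^sub>m n - Y * X)"
proof -
  let ?I = "1\<^sub>m n :: 'b mat"
  let ?Z = "0\<^sub>m n n :: 'b mat"
  let ?zI = "z \<cdot>\<^sub>m 1\<^sub>m n :: 'b mat"
  define M1 where "M1 = four_block_mat ?zI X Y ?I"
  define E1 where "E1 = four_block_mat ?I ?Z (- Y) ?I"
  define E2 where "E2 = four_block_mat ?I ?Z (- Y) ?zI"
  have cM1: "M1 \<in> carrier_mat (n+n) (n+n)" unfolding M1_def using X Y by auto
  have cE1: "E1 \<in> carrier_mat (n+n) (n+n)" unfolding E1_def using X Y by auto
  have cE2: "E2 \<in> carrier_mat (n+n) (n+n)" unfolding E2_def using X Y by auto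
  have "M1 * E1 = four_block_mat (?zI * ?I + X * (- Y)) (?zI * ?Z + X * ?I)
       (Y * ?I + ?I * (- Y)) (Y * ?Z + ?I * ?I)"
    unfolding M1_def E1_def by (rule mult_four_block_mat, insert X Y, auto)
  also have "\<dots> = four_block_mat (?zI - X * Y) X ?Z ?I"
    using X Y by (intro arg_cong4[where f = four_block_mat] eq_matI) (auto simp: scalar_prod_uminus_right)
  finally have p1: "M1 * E1 = four_block_mat (?zI - X * Y) X ?Z ?I" .
  have "E2 * M1 = four_block_mat (?I * ?zI + ?Z * Y) (?I * X + ?Z * ?I)
       (- Y * ?zI + ?zI * Y) (- Y * X + ?zI * ?I)"
    unfolding M1_def E2_def by (rule mult_four_block_mat, insert X Y, auto)
  also have "\<dots> = four_block_mat ?zI X ?Z (?zI - Y * X)"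
    using X Y by (intro arg_cong4[where f = four_block_mat] eq_matI) auto
  finally have p2: "E2 * M1 = four_block_mat ?zI X ?Z (?zI - Y * X)" .
  have dE1: "det E1 = 1" unfolding E1_def
    by (subst det_four_block_mat_upper_right_zero[of _ n _ n], insert Y, auto)
  have dE2: "det E2 = z ^ n" unfolding E2_def
    by (subst det_four_block_mat_upper_right_zero[of _ n _ n], insert Y, auto)
  have d1: "det (four_block_mat (?zI - X * Y) X ?Z ?I) = det (?zI - X * Y) * det ?I"
    by (rule det_four_block_mat_lower_left_zero, insert X Y, auto)
  have d2: "det (four_block_mat ?zI X ?Z (?zI - Y * X)) = det ?zI * det (?zI - Y * X)"
    by (rule det_four_block_mat_lower_left_zero, insert X Y, auto)
  have "det M1 = det (?zI - X * Y)"
    using det_mult[OF cM1 cE1] p1 dE1 d1 by simp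
  moreover have "z ^ n * det M1 = z ^ n * det (?zI - Y * X)"
  proof -
    have "det ?zI = z ^ n" by simp
    with d2 have "det (E2 * M1) = z ^ n * det (?zI - Y * X)" using p2 by simp
    moreover have "det (E2 * M1) = z ^ n * det M1" using det_mult[OF cE2 cM1] dE2 by simp
    ultimately show ?thesis by simp
  qed
  ultimately show ?thesis using z by (metis mult_left_cancel power_not_zero)
qed

lemma char_poly_comm:
  fixes X Y :: "'a::field mat"
  assumes X: "X \<in> carrier_mat n n" and Y: "Y \<in> carrier_mat n n"
  shows "char_poly (X * Y) = char_poly (Y * X)"
proof -
  let ?m = "map_mat (\<lambda>a. [:a:])"
  have e: "char_poly_matrix (A * B) = [:0,1:] \<cdot>\<^sub>m 1\<^sub>m n - ?m A * ?m B"
    if A: "A \<in> carrier_mat n n" and B: "B \<in> carrier_mat n n" for A B :: "'a mat"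
  proof -
    have "char_poly_matrix (A * B) = [:0,1:] \<cdot>\<^sub>m 1\<^sub>m n - ?m (A * B)"
      unfolding char_poly_matrix_def using A B by (intro eq_matI) auto
    also have "?m (A * B) = ?m A * ?m B" by (rule map_poly_mult(1)[OF A B])
    finally show ?thesis .
  qed
  have "char_poly (X * Y) = det ([:0,1:] \<cdot>\<^sub>m 1\<^sub>m n - ?m X * ?m Y)"
    unfolding char_poly_def e[OF X Y] ..
  also have "\<dots> = det ([:0,1:] \<cdot>\<^sub>m 1\<^sub>m n - ?m Y * ?m X)"
    by (rule det_sylvester, insert X Y, auto)
  also have "\<dots> = char_poly (Y * X)"
    unfolding char_poly_def e[OF Y X] ..
  finally show ?thesis .
qed

lemma char_poly_zero_cols:
  fixes A :: "'a::field mat"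
  assumes A: "A \<in> carrier_mat n n" and S: "S \<subseteq> {0..<n}"
    and z: "\<And>i j. i < n \<Longrightarrow> j < n \<Longrightarrow> j \<notin> S \<Longrightarrow> A $$ (i, j) = 0"
  shows "[:0,1:] ^ (n - card S) dvd char_poly A"
proof -
  let ?M = "char_poly_matrix A"
  have M: "?M \<in> carrier_mat n n" using A by simp
  have ent: "?M $$ (i, j) = (if i = j then [:0,1:] else 0) + [:- A $$ (i, j):]" if "i < n" "j < n" for i j
    using A that unfolding char_poly_matrix_def by auto
  show ?thesis unfolding char_poly_def det_def'[OF M]
  proof (rule dvd_sum)
    fix p assume "p \<in> {p. p permutes {0..<n}}"
    hence p: "p permutes {0..<n}" by auto
    define I1 where "I1 = {i \<in> {0..<n}. p i \<notin> S}"
    have I1: "I1 \<subseteq> {0..<n}" unfolding I1_def by auto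
    have "p ` I1 = {0..<n} - S"
    proof
      show "p ` I1 \<subseteq> {0..<n} - S" unfolding I1_def using p by (auto simp: permutes_in_image)
      show "{0..<n} - S \<subseteq> p ` I1"
      proof
        fix j assume j: "j \<in> {0..<n} - S"
        obtain i where "p i = j" by (metis p permutes_surj surj_def)
        moreover have "i \<in> {0..<n}" using j \<open>p i = j\<close> p by (metis Diff_iff permutes_in_image)
        ultimately show "j \<in> p ` I1" unfolding I1_def using j by auto
      qed
    qed
    moreover have "inj_on p I1" using p permutes_inj inj_on_subset by blast
    ultimately have cI1: "card I1 = n - card S"
      using S by (metis card_Diff_subset card_atLeastLessThan card_image finite_subset finite_atLeastLessThan diff_zero)
    have "[:0,1:] ^ card I1 dvd (\<Prod>i\<in>I1. ?M $$ (i, p i))"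
    proof -
      have "(\<Prod>i\<in>I1. [:0,1:]) dvd (\<Prod>i\<in>I1. ?M $$ (i, p i))"
      proof (rule prod_dvd_prod)
        fix i assume "i \<in> I1"
        hence i: "i < n" "p i < n" "p i \<notin> S" unfolding I1_def using p by (auto simp: permutes_in_image)
        show "[:0,1:] dvd ?M $$ (i, p i)" unfolding ent[OF i(1,2)] z[OF i] by auto
      qed
      thus ?thesis by simp
    qed
    also have "\<dots> dvd (\<Prod>i = 0..<n. ?M $$ (i, p i))"
      by (rule prod_dvd_prod_subset[OF _ I1], simp)
    finally show "[:0,1:] ^ (n - card S) dvd signof p * (\<Prod>i = 0..<n. ?M $$ (i, p i))"
      unfolding cI1 by simp
  qed
qed

lemma num_nonzero_eigs_factor:
  fixes A :: "complex mat"
  assumes A: "A \<in> carrier_mat n n" and cp: "char_poly A = (\<Prod>a\<leftarrow>as. [:- a, 1:])"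
  shows "num_nonzero_eigs A = length (filter (\<lambda>a. a \<noteq> 0) as)"
proof -
  have ev: "{e. eigenvalue A e \<and> e \<noteq> 0} = {e \<in> set as. e \<noteq> 0}"
    unfolding eigenvalue_root_char_poly[OF A] cp poly_prod_list prod_list_zero_iff by auto
  have ord: "order e (char_poly A) = count_list as e" for e
  proof -
    have "order e (char_poly A) = sum_list (map (order e) (map (\<lambda>a. [:- a, 1:]) as))"
      unfolding cp by (subst order_prod_list) (auto simp: prod_list.eq_foldr)
    also have "\<dots> = count_list as e"
    proof (induct as)
      case (Cons a as)
      have "order e [:- a, 1:] = (if a = e then 1 else 0)"
        using order_linear_power[of e "- a" 1] by auto
      thus ?case using Cons by simp
    qed simp
    finally show ?thesis .
  qed
  have "num_nonzero_eigs A = (\<Sum>e\<in>{e \<in> set as. e \<noteq> 0}. count_list (filter (\<lambda>a. a \<noteq> 0) as) e)"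
    unfolding num_nonzero_eigs_def ev ord by (rule sum.cong, auto simp: count_list_eq_length_filter filter_filter intro!: arg_cong[of _ _ length] filter_cong)
  also have "\<dots> = length (filter (\<lambda>a. a \<noteq> 0) as)"
    by (rule sum_count_set, auto)
  finally show ?thesis .
qed

definition H :: "nat \<Rightarrow> nat \<Rightarrow> complex" where
  "H c b = [[1,1,1,1],[1,1,-1,-1],[1,-1,-1,1],[1,-1,1,-1]] ! c ! b"

lemma less4: "(x::nat) < 4 \<longleftrightarrow> x = 0 \<or> x = 1 \<or> x = 2 \<or> x = 3" by auto

lemma s2: "(1 / complex_of_real (sqrt 2)) * (1 / complex_of_real (sqrt 2)) = 1/2"
  by (simp flip: of_real_mult)
lemma s2m: "(- 1 / complex_of_real (sqrt 2)) * (1 / complex_of_real (sqrt 2)) = - 1/2"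
  "(1 / complex_of_real (sqrt 2)) * (- 1 / complex_of_real (sqrt 2)) = - 1/2"
  "(- 1 / complex_of_real (sqrt 2)) * (- 1 / complex_of_real (sqrt 2)) = 1/2"
  by (simp_all flip: of_real_mult)

lemma less4_cases: "(x::nat) < 4 \<Longrightarrow> P 0 \<Longrightarrow> P 1 \<Longrightarrow> P 2 \<Longrightarrow> P 3 \<Longrightarrow> P x"
  by (auto simp: less4)
lemma s2b: "complex_of_real (sqrt 2) * complex_of_real (sqrt 2) = 2"
  by (simp flip: of_real_mult)
lemma basisB_eval: "r < 4 \<Longrightarrow> c < 4 \<Longrightarrow> l < 4 \<Longrightarrow> j < 4 \<Longrightarrow> basisB r c l j = (if Lsq l j = r then H c (Msq l j) / 2 else 0)"
  apply (erule less4_cases[where x = r]; erule less4_cases[where x = c]; erule less4_cases[where x = l]; erule less4_cases[where x = j])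
  by (simp_all add: basisB_def tens_def arrX_def arrY_def arrSign_def PsiP_def PsiM_def XiP_def XiM_def
     Lsq_def Msq_def H_def s2 s2m s2b)

lemma H_orth: "c < 4 \<Longrightarrow> c' < 4 \<Longrightarrow> (\<Sum>b<4. H c b * H c' b) = (if c = c' then 4 else 0)"
  by (erule less4_cases[where x = c]; erule less4_cases[where x = c']) (simp_all add: H_def eval_nat_numeral)

lemma H_cnj: "c < 4 \<Longrightarrow> b < 4 \<Longrightarrow> cnj (H c b) = H c b"
  by (erule less4_cases[where x = c]; erule less4_cases[where x = b]) (simp_all add: H_def)

lemma sum_perm: "(\<Sum>l<4. \<Sum>j<4. g (Lsq l j) (Msq l j)) = (\<Sum>a<4. \<Sum>b<4. (g a b :: 'a :: comm_monoid_add))"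
  by (simp add: eval_nat_numeral Lsq_def Msq_def ac_simps)

lemma P16_Q:
  assumes "\<And>l j. l < 4 \<Longrightarrow> j < 4 \<Longrightarrow> psi l j = Q (Lsq l j) (Msq l j)" and "a < 4" "b < 4"
  shows "P16 psi a b = Q a b"
proof -
  have "P16 psi a b = (\<Sum>l<4. \<Sum>j<4. if Lsq l j = a \<and> Msq l j = b then Q (Lsq l j) (Msq l j) else 0)"
    unfolding P16_def by (intro sum.cong refl) (auto simp: assms(1))
  also have "\<dots> = Q a b" using assms(2,3)
    by (erule_tac less4_cases[where x = a]; erule_tac less4_cases[where x = b]) (simp_all add: eval_nat_numeral Lsq_def Msq_def)
  finally show ?thesis .
qed

definition Qf :: "nat set \<Rightarrow> nat set \<Rightarrow> (nat \<Rightarrow> nat \<Rightarrow> complex) \<Rightarrow> nat \<Rightarrow> nat \<Rightarrow> complex" where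
  "Qf R C \<alpha> a b = (\<Sum>c\<in>C. (if a \<in> R then \<alpha> a c else 0) * H c b / 2)"

definition Gf :: "nat set \<Rightarrow> nat set \<Rightarrow> (nat \<Rightarrow> nat \<Rightarrow> complex) \<Rightarrow> nat \<Rightarrow> nat \<Rightarrow> complex" where
  "Gf R C \<alpha> a a' = (\<Sum>c\<in>C. (if a \<in> R then \<alpha> a c else 0) * cnj (if a' \<in> R then \<alpha> a' c else 0))"

lemma psi_Q:
  assumes R: "R \<subseteq> {0..<4}" and C: "C \<subseteq> {0..<4}" and l: "l < 4" and j: "j < 4"
  shows "(\<Sum>r\<in>R. \<Sum>c\<in>C. \<alpha> r c * basisB r c l j) = Qf R C \<alpha> (Lsq l j) (Msq l j)"
proof -
  have "(\<Sum>r\<in>R. \<Sum>c\<in>C. \<alpha> r c * basisB r c l j)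
     = (\<Sum>r\<in>R. \<Sum>c\<in>C. if r = Lsq l j then \<alpha> r c * H c (Msq l j) / 2 else 0)"
  proof (intro sum.cong refl)
    fix r c assume "r \<in> R" "c \<in> C"
    hence "r < 4" "c < 4" using R C by auto
    thus "\<alpha> r c * basisB r c l j = (if r = Lsq l j then \<alpha> r c * H c (Msq l j) / 2 else 0)"
      using l j by (auto simp: basisB_eval)
  qed
  also have "\<dots> = (\<Sum>c\<in>C. \<Sum>r\<in>R. if r = Lsq l j then \<alpha> r c * H c (Msq l j) / 2 else 0)"
    by (rule sum.swap)
  also have "\<dots> = Qf R C \<alpha> (Lsq l j) (Msq l j)"
    unfolding Qf_def using R by (intro sum.cong refl) (auto simp: finite_subset)
  finally show ?thesis .
qed

lemma QQ:
  assumes C: "C \<subseteq> {0..<4}"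
  shows "(\<Sum>b<4. Qf R C \<alpha> a b * cnj (Qf R C \<alpha> a' b)) = Gf R C \<alpha> a a'"
proof -
  define \<beta> where "\<beta> a c = (if a \<in> R then \<alpha> a c else 0)" for a c
  have fC: "finite C" using C finite_subset by blast
  have "(\<Sum>b<4. Qf R C \<alpha> a b * cnj (Qf R C \<alpha> a' b))
     = (\<Sum>b<4. (\<Sum>c\<in>C. \<beta> a c * H c b / 2) * (\<Sum>c'\<in>C. cnj (\<beta> a' c') * H c' b / 2))"
    unfolding Qf_def \<beta>_def cnj_sum using C by (intro sum.cong refl arg_cong2[where f = "(*)"]) (auto simp: H_cnj)
  also have "\<dots> = (\<Sum>b<4. \<Sum>c\<in>C. \<Sum>c'\<in>C. \<beta> a c * cnj (\<beta> a' c') / 4 * (H c b * H c' b))"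
    unfolding sum_product by (intro sum.cong refl) simp
  also have "\<dots> = (\<Sum>c\<in>C. \<Sum>b<4. \<Sum>c'\<in>C. \<beta> a c * cnj (\<beta> a' c') / 4 * (H c b * H c' b))"
    by (rule sum.swap)
  also have "\<dots> = (\<Sum>c\<in>C. \<Sum>c'\<in>C. \<Sum>b<4. \<beta> a c * cnj (\<beta> a' c') / 4 * (H c b * H c' b))"
    by (rule sum.cong[OF refl], rule sum.swap)
  also have "\<dots> = (\<Sum>c\<in>C. \<Sum>c'\<in>C. if c' = c then \<beta> a c * cnj (\<beta> a' c) else 0)"
    unfolding sum_distrib_left[symmetric]
  proof (intro sum.cong refl)
    fix c c' assume "c \<in> C" "c' \<in> C"
    hence "c < 4" "c' < 4" using C by auto
    thus "\<beta> a c * cnj (\<beta> a' c') / 4 * (\<Sum>b<4. H c b * H c' b) = (if c' = c then \<beta> a c * cnj (\<beta> a' c) else 0)"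
      by (auto simp: H_orth)
  qed
  also have "\<dots> = Gf R C \<alpha> a a'"
    unfolding Gf_def \<beta>_def using fC by simp
  finally show ?thesis .
qed

lemma PhiA_G:
  assumes R: "R \<subseteq> {0..<4}" and C: "C \<subseteq> {0..<4}"
    and psi: "psi = (\<lambda>a b. \<Sum>r\<in>R. \<Sum>c\<in>C. \<alpha> r c * basisB r c a b)"
  shows "PhiA psi = mat 4 4 (\<lambda>(a, a'). Gf R C \<alpha> a a')"
    and "\<And>a b. a < 4 \<Longrightarrow> b < 4 \<Longrightarrow> P16 psi a b = Qf R C \<alpha> a b"
proof -
  show P: "\<And>a b. a < 4 \<Longrightarrow> b < 4 \<Longrightarrow> P16 psi a b = Qf R C \<alpha> a b"
    by (rule P16_Q, unfold psi, rule psi_Q[OF R C])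
  show "PhiA psi = mat 4 4 (\<lambda>(a, a'). Gf R C \<alpha> a a')"
    unfolding PhiA_def by (rule eq_matI) (auto simp: P QQ[OF C])
qed

lemma order_prod_lin: "order e (\<Prod>a\<leftarrow>as. [:- a, 1:]) = count_list as (e :: 'a :: idom)"
proof -
  have "order e (\<Prod>a\<leftarrow>as. [:- a, 1:]) = sum_list (map (order e) (map (\<lambda>a. [:- a, 1:]) as))"
    by (subst order_prod_list) (auto simp: prod_list.eq_foldr)
  also have "\<dots> = count_list as e"
  proof (induct as)
    case (Cons a as)
    have "order e [:- a, 1:] = (if a = e then 1 else 0)"
      using order_linear_power[of e "- a" 1] by auto
    thus ?case using Cons by simp
  qed simp
  finally show ?thesis .
qed

lemma num_le:
  fixes A :: "complex mat"
  assumes A: "A \<in> carrier_mat n n" and d: "[:0,1:] ^ k dvd char_poly A"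
  shows "num_nonzero_eigs A + k \<le> n"
proof -
  obtain as where cp: "char_poly A = (\<Prod>a\<leftarrow>as. [:- a, 1:])" and len: "length as = n"
    using char_poly_factorized[OF A] by blast
  have nz: "char_poly A \<noteq> 0" unfolding cp by (auto simp: prod_list_zero_iff)
  have "k \<le> order 0 (char_poly A)" by (rule order_max, insert d nz, auto)
  also have "\<dots> = length (filter (\<lambda>a. \<not> a \<noteq> 0) as)"
    unfolding cp order_prod_lin count_list_eq_length_filter by (metis (mono_tags) eq_commute)
  finally have "k \<le> length (filter (\<lambda>a. \<not> a \<noteq> 0) as)" .
  moreover have "num_nonzero_eigs A = length (filter (\<lambda>a. a \<noteq> 0) as)"
    by (rule num_nonzero_eigs_factor[OF A cp])
  ultimately show ?thesis using sum_length_filter_compl[of "\<lambda>a. a \<noteq> 0" as] len by linarith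
qed

lemma sum4_restrict: "C \<subseteq> {0..<4} \<Longrightarrow> (\<Sum>c\<in>{0..<4::nat}. if c \<in> C then f c else 0) = sum f C"
  using sum.inter_restrict[of "{0..<4::nat}" f C] by (simp add: Int_absorb1)

lemma upper_bound:
  assumes R: "R \<subseteq> {0..<4}" and C: "C \<subseteq> {0..<4}"
  shows "num_nonzero_eigs (mat 4 4 (\<lambda>(a, a'). Gf R C \<alpha> a a')) \<le> card R"
    and "num_nonzero_eigs (mat 4 4 (\<lambda>(a, a'). Gf R C \<alpha> a a')) \<le> card C"
proof -
  define Bm where "Bm = mat 4 4 (\<lambda>(a, c). if a \<in> R \<and> c \<in> C then \<alpha> a c else 0)"
  define Bd where "Bd = mat 4 4 (\<lambda>(c, a). cnj (Bm $$ (a, c)))"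
  have cB: "Bm \<in> carrier_mat 4 4" "Bd \<in> carrier_mat 4 4" unfolding Bm_def Bd_def by auto
  have G: "mat 4 4 (\<lambda>(a, a'). Gf R C \<alpha> a a') = Bm * Bd"
  proof (rule eq_matI)
    fix a a' assume a: "a < dim_row (Bm * Bd)" and a': "a' < dim_col (Bm * Bd)"
    hence "a < 4" "a' < 4" unfolding Bm_def Bd_def by auto
    hence "(Bm * Bd) $$ (a, a') = (\<Sum>i\<in>{0..<4}. if i \<in> C then (if a \<in> R then \<alpha> a i else 0) * cnj (if a' \<in> R then \<alpha> a' i else 0) else 0)"
      unfolding Bm_def Bd_def by (auto simp: scalar_prod_def intro!: sum.cong)
    thus "mat 4 4 (\<lambda>(a, a'). Gf R C \<alpha> a a') $$ (a, a') = (Bm * Bd) $$ (a, a')"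
      unfolding Gf_def sum4_restrict[OF C] using \<open>a < 4\<close> \<open>a' < 4\<close> by simp
  qed (auto simp: Bm_def Bd_def)
  have cR: "card R \<le> 4" using R by (metis card_atLeastLessThan card_mono finite_atLeastLessThan diff_zero)
  have cC: "card C \<le> 4" using C by (metis card_atLeastLessThan card_mono finite_atLeastLessThan diff_zero)
  have "[:0,1:] ^ (4 - card R) dvd char_poly (Bm * Bd)"
    by (rule char_poly_zero_cols[OF _ R], insert cB, auto simp: scalar_prod_def Bm_def Bd_def)
  from num_le[OF mult_carrier_mat[OF cB] this] cR show "num_nonzero_eigs (mat 4 4 (\<lambda>(a, a'). Gf R C \<alpha> a a')) \<le> card R"
    unfolding G by linarith
  have "[:0,1:] ^ (4 - card C) dvd char_poly (Bd * Bm)"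
    by (rule char_poly_zero_cols[OF _ C], insert cB, auto simp: scalar_prod_def Bm_def Bd_def)
  hence "[:0,1:] ^ (4 - card C) dvd char_poly (Bm * Bd)"
    using char_poly_comm[OF cB] by simp
  from num_le[OF mult_carrier_mat[OF cB] this] cC show "num_nonzero_eigs (mat 4 4 (\<lambda>(a, a'). Gf R C \<alpha> a a')) \<le> card C"
    unfolding G by linarith
qed
lemma witness:
  assumes R: "R \<subseteq> {0..<4}" and C: "C \<subseteq> {0..<4}" and Rne: "R \<noteq> {}" and Cne: "C \<noteq> {}"
  shows "\<exists>psi. (\<exists>\<alpha> :: nat \<Rightarrow> nat \<Rightarrow> complex. psi = (\<lambda>a b. \<Sum>r\<in>R. \<Sum>c\<in>C. \<alpha> r c * basisB r c a b)) \<and>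
            (\<Sum>a<4. \<Sum>b<4. (cmod (psi a b))\<^sup>2) = 1 \<and> num_nonzero_eigs (PhiA psi) = min (card R) (card C)"
proof -
  define k where "k = min (card R) (card C)"
  have fR: "finite R" and fC: "finite C" using R C finite_subset by blast+
  have k1: "k \<ge> 1" unfolding k_def using fR fC Rne Cne by (simp add: Suc_le_eq card_gt_0_iff)
  obtain S where SR: "S \<subseteq> R" and cS: "card S = k" and fS: "finite S"
    using obtain_subset_with_card_n[of k R] unfolding k_def by auto
  obtain T where TC: "T \<subseteq> C" and cT: "card T = k" and fT: "finite T"
    using obtain_subset_with_card_n[of k C] unfolding k_def by auto
  obtain f where bij: "bij_betw f S T" using finite_same_card_bij[OF fS fT] cS cT by auto
  have fST: "a \<in> S \<Longrightarrow> f a \<in> C" for a using bij TC unfolding bij_betw_def by auto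
  have finj: "a \<in> S \<Longrightarrow> a' \<in> S \<Longrightarrow> f a = f a' \<Longrightarrow> a = a'" for a a'
    using bij unfolding bij_betw_def inj_on_def by auto
  define s :: complex where "s = of_real (1 / sqrt (real k))"
  have ss: "s * cnj s = of_real (1 / real k)" unfolding s_def using k1
    by (simp flip: of_real_mult add: real_sqrt_mult[symmetric])
  define \<alpha> where "\<alpha> r c = (if r \<in> S \<and> c = f r then s else 0)" for r c
  define psi where "psi = (\<lambda>a b. \<Sum>r\<in>R. \<Sum>c\<in>C. \<alpha> r c * basisB r c a b)"
  have \<alpha>R: "(if a \<in> R then \<alpha> a c else 0) = \<alpha> a c" for a c unfolding \<alpha>_def using SR by auto
  have Gv: "Gf R C \<alpha> a a' = (if a = a' \<and> a \<in> S then of_real (1 / real k) else 0)" for a a'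
  proof (cases "a \<in> S")
    case True
    have "Gf R C \<alpha> a a' = (\<Sum>c\<in>C. if c = f a then s * cnj (\<alpha> a' c) else 0)"
      unfolding Gf_def \<alpha>R by (intro sum.cong refl) (auto simp: \<alpha>_def True)
    also have "\<dots> = s * cnj (\<alpha> a' (f a))" using fC fST[OF True] by simp
    also have "\<dots> = (if a = a' \<and> a \<in> S then of_real (1 / real k) else 0)"
      unfolding \<alpha>_def using True finj ss by auto
    finally show ?thesis .
  next
    case False
    thus ?thesis unfolding Gf_def \<alpha>R by (auto simp: \<alpha>_def)
  qed
  define D where "D = mat 4 4 (\<lambda>(a, a'). if a = a' \<and> a \<in> S then complex_of_real (1 / real k) else 0)"
  have PD: "PhiA psi = D" unfolding PhiA_G(1)[OF R C psi_def] D_def Gv ..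
  have cD: "D \<in> carrier_mat 4 4" unfolding D_def by simp
  have ut: "upper_triangular D" unfolding D_def upper_triangular_def by auto
  have S4: "S \<subseteq> {0..<4}" using SR R by auto
  have "num_nonzero_eigs D = length (filter (\<lambda>a. a \<noteq> 0) (diag_mat D))"
    by (rule num_nonzero_eigs_factor[OF cD char_poly_upper_triangular[OF cD ut]])
  also have "\<dots> = card {i. i < 4 \<and> i \<in> S}"
    unfolding length_filter_conv_card using k1 by (intro arg_cong[where f = card]) (auto simp: diag_mat_def D_def split: if_splits)
  also have "{i. i < 4 \<and> i \<in> S} = S" using S4 by auto
  finally have num: "num_nonzero_eigs (PhiA psi) = k" unfolding PD cS .
  have Qv: "psi l j = Qf R C \<alpha> (Lsq l j) (Msq l j)" if "l < 4" "j < 4" for l j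
    unfolding psi_def by (rule psi_Q[OF R C that])
  have cm: "(cmod z)\<^sup>2 = Re (z * cnj z)" for z by (simp add: complex_mult_cnj cmod_power2)
  have "(\<Sum>a<4. \<Sum>b<4. (cmod (psi a b))\<^sup>2) = (\<Sum>l<4. \<Sum>j<4. (cmod (Qf R C \<alpha> (Lsq l j) (Msq l j)))\<^sup>2)"
    by (intro sum.cong refl) (simp add: Qv)
  also have "\<dots> = (\<Sum>a<4. \<Sum>b<4. (cmod (Qf R C \<alpha> a b))\<^sup>2)"
    by (rule sum_perm)
  also have "\<dots> = (\<Sum>a<4. Re (\<Sum>b<4. Qf R C \<alpha> a b * cnj (Qf R C \<alpha> a b)))"
    unfolding cm Re_sum ..
  also have "\<dots> = (\<Sum>a\<in>{0..<4}. if a \<in> S then 1 / real k else 0)"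
    unfolding QQ[OF C] Gv by (intro sum.cong) auto
  also have "\<dots> = (\<Sum>a\<in>S. 1 / real k)" by (rule sum4_restrict[OF S4])
  also have "\<dots> = 1" using cS k1 by simp
  finally have nrm: "(\<Sum>a<4. \<Sum>b<4. (cmod (psi a b))\<^sup>2) = 1" .
  show ?thesis using num nrm psi_def unfolding k_def by blast
qed

theorem theorem3:
  fixes R C :: "nat set"
  assumes "R \<subseteq> {0..<4}" "C \<subseteq> {0..<4}" "R \<noteq> {}" "C \<noteq> {}"
  shows "Max {num_nonzero_eigs (PhiA psi) | psi.
            (\<exists>\<alpha> :: nat \<Rightarrow> nat \<Rightarrow> complex.
               psi = (\<lambda>a b. \<Sum>r\<in>R. \<Sum>c\<in>C. \<alpha> r c * basisB r c a b)) \<and>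
            (\<Sum>a<4. \<Sum>b<4. (cmod (psi a b))\<^sup>2) = 1}
         = min (card R) (card C)" (is "Max ?P = ?k")
proof -
  have ub: "x \<le> ?k" if "x \<in> ?P" for x
  proof -
    from that obtain psi \<alpha> where x: "x = num_nonzero_eigs (PhiA psi)"
      and psi: "psi = (\<lambda>a b. \<Sum>r\<in>R. \<Sum>c\<in>C. \<alpha> r c * basisB r c a b)" by blast
    show ?thesis unfolding x PhiA_G(1)[OF assms(1,2) psi]
      using upper_bound[OF assms(1,2), of \<alpha>] by simp
  qed
  obtain psi where h: "(\<exists>\<alpha> :: nat \<Rightarrow> nat \<Rightarrow> complex. psi = (\<lambda>a b. \<Sum>r\<in>R. \<Sum>c\<in>C. \<alpha> r c * basisB r c a b))"
    "(\<Sum>a<4. \<Sum>b<4. (cmod (psi a b))\<^sup>2) = 1" "num_nonzero_eigs (PhiA psi) = ?k"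
    using witness[OF assms] by blast
  have mem: "?k \<in> ?P" using h by force
  have "?P \<subseteq> {..?k}" using ub by blast
  hence fin: "finite ?P" using finite_subset by blast
  show ?thesis by (rule Max_eqI[OF fin ub mem])
qed

end
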